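(* For every $x\ge0$, $$J_0(\sqrt2x)-2J_0(x)+1=\frac{2}{\pi}\int_0^{\pi/2}\bigl(1-\cos(x\cos t)\bigr)\bigl(1-\cos(x\sin t)\bigr)\,dt.$$ In particular $J_0(\sqrt2x)-2J_0(x)+1\ge0$ for all $x\ge0$. Consequently, for all $r,\theta_2,\sigma>0$, $\alpha\in(0,2)$, $b\in(0,1/2)$ and $\kappa,\eta\in\mathbb R$, the quantity $$g_{r,\alpha}(\vartheta)=\frac{\sigma^2\psi_{r,\alpha}(\theta_2)}{(1-2b)^2}\int_b^{1-b}\!\int_b^{1-b}e^{-\kappa y-\eta z}\,dy\,dz$$ is strictly positive.
   Context: $J_0$ denotes the Bessel function of the first kind of order $0$, i.e. $J_0(x)=\frac{2}{\pi}\int_0^{\pi/2}\cos(x\cos t)\,dt$. For $r,\alpha,\theta_2>0$, $$\psi_{r,\alpha}(\theta_2)=\frac{2}{\theta_2\pi}\int_0^\infty\frac{1-e^{-x^2}}{x^{1+2\alpha}}\Bigl(J_0\bigl(\tfrac{\sqrt2rx}{\sqrt{\theta_2}}\bigr)-2J_0\bigl(\tfrac{rx}{\sqrt{\theta_2}}\bigr)+1\Bigr)dx,$$ and $\vartheta=(\kappa,\eta,\theta_2,\sigma^2)$. *)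

theory Defs
  imports "HOL-Analysis.Analysis"
begin

definition J0 :: "real \<Rightarrow> real" where
  "J0 x = 2 / pi * integral {0..pi/2} (\<lambda>t. cos (x * cos t))"

definition psi :: "real \<Rightarrow> real \<Rightarrow> real \<Rightarrow> real" where
  "psi r \<alpha> \<theta>2 = 2 / (\<theta>2 * pi) *
     (LINT x:{0<..}|lborel. (1 - exp (- (x\<^sup>2))) / x powr (1 + 2 * \<alpha>) *
        (J0 (sqrt 2 * r * x / sqrt \<theta>2) - 2 * J0 (r * x / sqrt \<theta>2) + 1))"

text \<open>g_{r,alpha}(vartheta) with vartheta = (kappa, eta, theta2, sigma^2) and parameter b.\<close>
definition g :: "real \<Rightarrow> real \<Rightarrow> real \<Rightarrow> real \<times> real \<times> real \<times> real \<Rightarrow> real" where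
  "g r \<alpha> b \<theta>v = (case \<theta>v of (\<kappa>, \<eta>, \<theta>2, s2) \<Rightarrow>
     s2 * psi r \<alpha> \<theta>2 / (1 - 2 * b)\<^sup>2 *
     (LBINT z=b..(1 - b). (LBINT y=b..(1 - b). exp (- \<kappa> * y - \<eta> * z))))"

end

theory Submission
  imports Defs
begin

lemma integral_refl_shift:
  fixes f :: "real \<Rightarrow> real"
  assumes "continuous_on {c-b..c-a} f"
  shows "integral {a..b} (\<lambda>t. f (c - t)) = integral {c-b..c-a} f"
proof -
  have "integral {- (-a)..- (-b)} (\<lambda>t. (\<lambda>s. f (s + c)) (- t)) = integral {-b..-a} (\<lambda>s. f (s + c))"
    using Henstock_Kurzweil_Integration.integral_reflect_real[of "-a" "-b" "\<lambda>s. f (s + c)"] by simp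
  then have "integral {a..b} (\<lambda>t. f (c - t)) = integral {-b..-a} (\<lambda>s. f (s + c))"
    by (simp add: algebra_simps)
  also have "\<dots> = integral {-b+c..-a+c} f"
    using integral_shift[of "-b" c "-a" f] assms by (simp add: o_def algebra_simps)
  finally show ?thesis by (simp add: algebra_simps)
qed

lemma integral_shift':
  fixes f :: "real \<Rightarrow> real"
  assumes "continuous_on {a+c..b+c} f"
  shows "integral {a..b} (\<lambda>t. f (t + c)) = integral {a+c..b+c} f"
  using integral_shift[of a c b f] assms by (simp add: o_def)

lemma cos_pi4_sq: "sqrt 2 * cos (pi/4) = 1" "sqrt 2 * sin (pi/4) = 1"
  by (simp_all add: cos_45 sin_45)

lemma part1:
  fixes x :: real
  shows "J0 (sqrt 2 * x) - 2 * J0 x + 1 =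
            2 / pi * integral {0..pi/2} (\<lambda>t. (1 - cos (x * cos t)) * (1 - cos (x * sin t)))"
proof -
  define F where "F s = cos (sqrt 2 * x * cos s)" for s
  define C where "C t = cos (x * cos t)" for t
  define S where "S t = cos (x * sin t)" for t
  define P where "P t = cos (x * cos t + x * sin t)" for t
  define M where "M t = cos (x * cos t - x * sin t)" for t
  have cF: "continuous_on A F" for A unfolding F_def by (intro continuous_intros)
  have cC: "continuous_on A C" for A unfolding C_def by (intro continuous_intros)
  have cS: "continuous_on A S" for A unfolding S_def by (intro continuous_intros)
  have cP: "continuous_on A P" for A unfolding P_def by (intro continuous_intros)
  have cM: "continuous_on A M" for A unfolding M_def by (intro continuous_intros)
  have iF: "F integrable_on {a..b}" for a b by (rule integrable_continuous_interval[OF cF])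
  have iC: "C integrable_on {a..b}" for a b by (rule integrable_continuous_interval[OF cC])
  have iS: "S integrable_on {a..b}" for a b by (rule integrable_continuous_interval[OF cS])
  have iP: "P integrable_on {a..b}" for a b by (rule integrable_continuous_interval[OF cP])
  have iM: "M integrable_on {a..b}" for a b by (rule integrable_continuous_interval[OF cM])
  have SC: "integral {0..pi/2} S = integral {0..pi/2} C"
  proof -
    have "integral {0..pi/2} S = integral {0..pi/2} (\<lambda>t. C (pi/2 - t))"
      by (simp add: S_def[abs_def] C_def[abs_def] cos_diff)
    also have "\<dots> = integral {0..pi/2} C"
      using integral_refl_shift[OF cC, where c="pi/2" and b="pi/2" and a=0] by simp
    finally show ?thesis .
  qed
  have PF: "P t = F (t - pi/4)" for t
  proof -
    have "sqrt 2 * cos (t - pi/4) = cos t + sin t"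
      by (simp add: cos_diff cos_45 sin_45 algebra_simps)
    then show ?thesis unfolding P_def F_def
      by (metis (no_types, lifting) distrib_left mult.assoc mult.commute)
  qed
  have MF: "M t = F (t + pi/4)" for t
  proof -
    have "sqrt 2 * cos (t + pi/4) = cos t - sin t"
      by (simp add: cos_add cos_45 sin_45 algebra_simps)
    then show ?thesis unfolding M_def F_def
      by (metis (no_types, lifting) right_diff_distrib mult.assoc mult.commute)
  qed
  have Psym: "P (pi/2 - t) = P t" for t by (simp add: P_def cos_diff sin_diff add.commute)
  have Msym: "M (pi/2 - t) = M t" for t
  proof -
    have "M (pi/2 - t) = cos (- (x * cos t - x * sin t))" by (simp add: M_def cos_diff sin_diff)
    then show ?thesis by (simp only: cos_minus M_def)
  qed
  have IP: "integral {0..pi/2} P = 2 * integral {0..pi/4} F"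
  proof -
    have "integral {0..pi/2} P = integral {0..pi/4} P + integral {pi/4..pi/2} P"
      using Henstock_Kurzweil_Integration.integral_combine[of 0 "pi/4" "pi/2" P] iP by simp
    moreover have "integral {0..pi/4} P = integral {pi/4..pi/2} P"
    proof -
      have "integral {0..pi/4} P = integral {0..pi/4} (\<lambda>t. P (pi/2 - t))" by (simp add: Psym)
      also have "\<dots> = integral {pi/4..pi/2} P"
        using integral_refl_shift[OF cP, where c="pi/2" and b="pi/4" and a=0] by simp
      finally show ?thesis .
    qed
    moreover have "integral {pi/4..pi/2} P = integral {0..pi/4} F"
    proof -
      have "integral {pi/4..pi/2} P = integral {pi/4..pi/2} (\<lambda>t. F (t + - (pi/4)))"
        by (simp add: PF[abs_def])
      also have "\<dots> = integral {0..pi/4} F"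
        using integral_shift'[OF cF, where a="pi/4" and c="-(pi/4)" and b="pi/2"] by simp
      finally show ?thesis .
    qed
    ultimately show ?thesis by simp
  qed
  have IM: "integral {0..pi/2} M = 2 * integral {pi/4..pi/2} F"
  proof -
    have "integral {0..pi/2} M = integral {0..pi/4} M + integral {pi/4..pi/2} M"
      using Henstock_Kurzweil_Integration.integral_combine[of 0 "pi/4" "pi/2" M] iM by simp
    moreover have "integral {pi/4..pi/2} M = integral {0..pi/4} M"
    proof -
      have "integral {pi/4..pi/2} M = integral {pi/4..pi/2} (\<lambda>t. M (pi/2 - t))" by (simp add: Msym)
      also have "\<dots> = integral {0..pi/4} M"
        using integral_refl_shift[OF cM, where c="pi/2" and b="pi/2" and a="pi/4"] by simp
      finally show ?thesis .
    qed
    moreover have "integral {0..pi/4} M = integral {pi/4..pi/2} F"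
    proof -
      have "integral {0..pi/4} M = integral {0..pi/4} (\<lambda>t. F (t + pi/4))"
        by (simp add: MF[abs_def])
      also have "\<dots> = integral {pi/4..pi/2} F"
        using integral_shift'[OF cF, where a=0 and c="pi/4" and b="pi/4"] by simp
      finally show ?thesis .
    qed
    ultimately show ?thesis by simp
  qed
  have IF: "integral {0..pi/2} F = integral {0..pi/4} F + integral {pi/4..pi/2} F"
    using Henstock_Kurzweil_Integration.integral_combine[of 0 "pi/4" "pi/2" F] iF by simp
  have eq: "(\<lambda>t. (1 - cos (x * cos t)) * (1 - cos (x * sin t))) =
      (\<lambda>t. 1 - C t - S t + (P t + M t) / 2)"
    by (rule ext) (simp add: C_def S_def P_def M_def cos_add cos_diff algebra_simps)
  have "integral {0..pi/2} (\<lambda>t. 1 - C t - S t + (P t + M t) / 2) =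
     pi/2 - integral {0..pi/2} C - integral {0..pi/2} S + (integral {0..pi/2} P + integral {0..pi/2} M) / 2"
  proof (rule integral_unique)
    have h1: "((\<lambda>t. 1::real) has_integral pi/2) {0..pi/2}"
      using has_integral_const_real[of "1::real" 0 "pi/2"] by simp
    have hC: "(C has_integral integral {0..pi/2} C) {0..pi/2}" using iC by (rule integrable_integral)
    have hS: "(S has_integral integral {0..pi/2} S) {0..pi/2}" using iS by (rule integrable_integral)
    have hP: "(P has_integral integral {0..pi/2} P) {0..pi/2}" using iP by (rule integrable_integral)
    have hM: "(M has_integral integral {0..pi/2} M) {0..pi/2}" using iM by (rule integrable_integral)
    show "((\<lambda>t. 1 - C t - S t + (P t + M t) / 2) has_integral
      (pi/2 - integral {0..pi/2} C - integral {0..pi/2} S + (integral {0..pi/2} P + integral {0..pi/2} M) / 2)) {0..pi/2}"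
      by (intro has_integral_add has_integral_diff has_integral_divide h1 hC hS hP hM)
  qed
  also have "\<dots> = pi/2 - 2 * integral {0..pi/2} C + integral {0..pi/2} F"
    using SC IP IM IF by simp
  finally have main: "integral {0..pi/2} (\<lambda>t. (1 - cos (x * cos t)) * (1 - cos (x * sin t)))
      = pi/2 - 2 * integral {0..pi/2} C + integral {0..pi/2} F" by (simp add: eq)
  show ?thesis unfolding main J0_def F_def C_def
    by (simp add: field_simps mult.assoc)
qed


definition hh :: "real \<Rightarrow> real" where "hh y = J0 (sqrt 2 * y) - 2 * J0 y + 1"
definition QQ :: "real \<Rightarrow> real \<Rightarrow> real" where
  "QQ y t = (1 - cos (y * cos t)) * (1 - cos (y * sin t))"

lemma one_minus_cos_le: "1 - cos (a::real) \<le> a^2 / 2"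
proof -
  have "cos a = 1 - 2 * sin (a/2) ^ 2" using cos_double_sin[of "a/2"] by simp
  moreover have "sin (a/2) ^ 2 \<le> (a/2)^2"
    using abs_sin_x_le_abs_x[of "a/2"] by (metis abs_ge_zero power2_abs power_mono)
  ultimately show ?thesis by (simp add: power_divide)
qed

lemma QQ_nonneg: "0 \<le> QQ y t"
  unfolding QQ_def by (intro mult_nonneg_nonneg) auto

lemma QQ_le4: "QQ y t \<le> 4"
proof -
  have "1 - cos (y * cos t) \<le> 2" "1 - cos (y * sin t) \<le> 2"
    using cos_ge_minus_one by (smt (verit))+
  then show ?thesis unfolding QQ_def
    using mult_mono[of "1 - cos (y * cos t)" 2 "1 - cos (y * sin t)" 2] by simp
qed

lemma QQ_le_y4: "QQ y t \<le> y^4 / 4"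
proof -
  have a: "1 - cos (y * cos t) \<le> y^2/2"
  proof -
    have "cos t ^ 2 \<le> 1" by (simp add: cos_squared_eq)
    then have "(y * cos t)^2 \<le> y^2" by (simp add: power_mult_distrib mult_left_le)
    then show ?thesis using one_minus_cos_le[of "y * cos t"] by simp
  qed
  have b: "1 - cos (y * sin t) \<le> y^2/2"
  proof -
    have "sin t ^ 2 \<le> 1" by (simp add: sin_squared_eq)
    then have "(y * sin t)^2 \<le> y^2" by (simp add: power_mult_distrib mult_left_le)
    then show ?thesis using one_minus_cos_le[of "y * sin t"] by simp
  qed
  have "QQ y t \<le> (y^2/2) * (y^2/2)" unfolding QQ_def
    by (rule mult_mono[OF a b]) auto
  then show ?thesis by (simp add: power_def)
qed

lemma hh_eq: "hh y = 2 / pi * integral {0..pi/2} (QQ y)"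
  unfolding hh_def QQ_def[abs_def] by (rule part1)

lemma QQ_int: "QQ y integrable_on {a..b}"
  unfolding QQ_def by (intro integrable_continuous_interval continuous_intros)

lemma hh_nonneg: "0 \<le> hh y"
  unfolding hh_eq by (intro mult_nonneg_nonneg integral_nonneg QQ_int QQ_nonneg) auto

lemma hh_le4: "hh y \<le> 4"
proof -
  have "integral {0..pi/2} (QQ y) \<le> integral {0..pi/2} (\<lambda>_. 4)"
    by (intro integral_le QQ_int QQ_le4) auto
  then have "integral {0..pi/2} (QQ y) \<le> 2 * pi" by simp
  then show ?thesis unfolding hh_eq using pi_gt_zero by (simp add: field_simps)
qed

lemma hh_le_y4: "hh y \<le> y^4/4"
proof -
  have "integral {0..pi/2} (QQ y) \<le> integral {0..pi/2} (\<lambda>_. y^4/4)"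
    by (intro integral_le QQ_int QQ_le_y4) auto
  then have "integral {0..pi/2} (QQ y) \<le> pi/2 * (y^4/4)" by simp
  then show ?thesis unfolding hh_eq using pi_gt_zero by (simp add: field_simps)
qed

lemma hh_lower:
  assumes "2 \<le> y" "y \<le> 3"
  shows "(1 - cos 1)^2 / 3 \<le> hh y"
proof -
  let ?c = "(1 - cos 1)^2"
  have key: "?c \<le> QQ y t" if t: "t \<in> {pi/6..pi/3}" for t
  proof -
    have ct: "1/2 \<le> cos t" using cos_monotone_0_pi_le[of t "pi/3"] t cos_60 by auto
    have st: "1/2 \<le> sin t" using sin_monotone_2pi_le[of "pi/6" t] t sin_30 by auto
    have c1: "1 \<le> y * cos t" using ct assms mult_mono[of 2 y "1/2" "cos t"] by simp
    have c2: "1 \<le> y * sin t" using st assms mult_mono[of 2 y "1/2" "sin t"] by simp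
    have c3: "y * cos t \<le> pi" using assms pi_gt3 cos_le_one[of t]
      by (smt (verit) mult_left_le)
    have c4: "y * sin t \<le> pi" using assms pi_gt3 sin_le_one[of t]
      by (smt (verit) mult_left_le)
    have "cos (y * cos t) \<le> cos 1" using cos_monotone_0_pi_le c1 c3 by auto
    moreover have "cos (y * sin t) \<le> cos 1" using cos_monotone_0_pi_le c2 c4 by auto
    moreover have "0 \<le> 1 - cos (1::real)" by simp
    ultimately show ?thesis unfolding QQ_def power2_eq_square
      by (intro mult_mono) auto
  qed
  have "integral {pi/6..pi/3} (\<lambda>_. ?c) \<le> integral {pi/6..pi/3} (QQ y)"
    by (intro integral_le QQ_int key) auto
  also have "\<dots> \<le> integral {0..pi/2} (QQ y)"
    by (intro integral_subset_le QQ_int) (auto simp: QQ_nonneg)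
  finally have "pi/6 * ?c \<le> integral {0..pi/2} (QQ y)" by simp
  then show ?thesis unfolding hh_eq using pi_gt_zero by (simp add: field_simps)
qed

lemma J0_lipschitz: "\<bar>J0 x - J0 y\<bar> \<le> \<bar>x - y\<bar>"
proof -
  have i: "(\<lambda>t. cos (z * cos t)) integrable_on {0..pi/2}" for z
    by (intro integrable_continuous_interval continuous_intros)
  have b: "\<bar>cos (x * cos t) - cos (y * cos t)\<bar> \<le> \<bar>x - y\<bar>" for t
  proof -
    have "\<bar>cos (x * cos t) - cos (y * cos t)\<bar> =
       2 * \<bar>sin ((x * cos t + y * cos t)/2)\<bar> * \<bar>sin ((y * cos t - x * cos t)/2)\<bar>"
      by (simp add: cos_diff_cos abs_mult)
    also have "\<dots> \<le> 2 * 1 * \<bar>(y * cos t - x * cos t)/2\<bar>"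
      by (intro mult_mono abs_sin_x_le_abs_x) auto
    also have "\<dots> = \<bar>x - y\<bar> * \<bar>cos t\<bar>" by (simp add: abs_mult left_diff_distrib[symmetric] abs_minus_commute)
    also have "\<dots> \<le> \<bar>x - y\<bar>" by (simp add: mult_left_le)
    finally show ?thesis .
  qed
  have e: "J0 x - J0 y = 2/pi * integral {0..pi/2} (\<lambda>t. cos (x * cos t) - cos (y * cos t))"
    unfolding J0_def by (simp add: integral_diff[OF i i] right_diff_distrib)
  have l: "\<bar>integral {0..pi/2} (\<lambda>t. cos (x * cos t) - cos (y * cos t))\<bar> \<le> pi/2 * \<bar>x - y\<bar>"
  proof -
    have "\<bar>integral {0..pi/2} (\<lambda>t. cos (x * cos t) - cos (y * cos t))\<bar>
       \<le> integral {0..pi/2} (\<lambda>t. \<bar>x - y\<bar>)"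
      using integral_norm_bound_integral[of "\<lambda>t. cos (x * cos t) - cos (y * cos t)" "{0..pi/2}" "\<lambda>t. \<bar>x - y\<bar>"]
        b i by (simp add: integrable_diff integrable_const_ivl)
    then show ?thesis by simp
  qed
  have "\<bar>J0 x - J0 y\<bar> = 2/pi * \<bar>integral {0..pi/2} (\<lambda>t. cos (x * cos t) - cos (y * cos t))\<bar>"
    unfolding e using pi_gt_zero by (simp add: abs_mult)
  also have "\<dots> \<le> 2/pi * (pi/2 * \<bar>x - y\<bar>)"
    by (rule mult_left_mono[OF l]) (use pi_gt_zero in simp)
  also have "\<dots> = \<bar>x - y\<bar>" by simp
  finally show ?thesis .
qed

lemma J0_cont: "continuous_on UNIV J0"
  by (rule lipschitz_on_continuous_on[of 1]) (intro lipschitz_onI, auto simp: dist_real_def J0_lipschitz)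

lemma J0_meas[measurable]: "J0 \<in> borel_measurable borel"
  by (rule borel_measurable_continuous_onI[OF J0_cont])


lemma tail_int:
  assumes "1 < p"
  shows "set_integrable lborel {1<..} (\<lambda>x::real. 4 * x powr (-p))"
proof -
  have "(\<lambda>x::real. x powr (-p)) integrable_on {1..}"
    using has_integral_powr_to_inf[of "-p" 1] assms unfolding integrable_on_def by auto
  then have "(\<lambda>x::real. x powr (-p)) absolutely_integrable_on {1..}"
    by (rule nonnegative_absolutely_integrable_1) auto
  then have "set_integrable lebesgue {1..} (\<lambda>x::real. x powr (-p))" by simp
  then have "set_integrable lborel {1..} (\<lambda>x::real. x powr (-p))"
    unfolding set_integrable_def by (subst (asm) integrable_completion) auto
  then have "set_integrable lborel {1<..} (\<lambda>x::real. x powr (-p))"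
    by (rule set_integrable_subset) auto
  then show ?thesis by (rule set_integrable_mult_right)
qed

lemma core:
  fixes c p :: real
  assumes c: "0 < c" and p1: "1 < p" and p5: "p < 5"
  defines "f \<equiv> (\<lambda>x. (1 - exp (- (x\<^sup>2))) / x powr p * hh (c * x))"
  shows "set_integrable lborel {0<..} f" "0 < (LINT x:{0<..}|lborel. f x)"
proof -
  have fmeas[measurable]: "f \<in> borel_measurable borel" unfolding f_def hh_def by measurable
  have fnn: "0 \<le> f x" if "0 < x" for x
    unfolding f_def using that by (intro mult_nonneg_nonneg divide_nonneg_nonneg hh_nonneg) auto
  have e1: "0 \<le> 1 - exp (- (x\<^sup>2))" "1 - exp (- (x\<^sup>2)) \<le> x\<^sup>2" "1 - exp (- (x\<^sup>2)) \<le> 1" for x :: real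
    using exp_ge_add_one_self[of "- (x\<^sup>2)"] by auto
  have b1: "f x \<le> c^4/4" if "0 < x" "x \<le> 1" for x
  proof -
    have "f x \<le> x\<^sup>2 / x powr p * ((c*x)^4/4)"
      unfolding f_def using that e1[of x]
      by (intro mult_mono divide_right_mono hh_le_y4 hh_nonneg) auto
    also have "\<dots> = c^4/4 * (x powr 6 / x powr p)"
    proof -
      have "x powr 6 = x^6" using that by (simp add: powr_numeral)
      moreover have "x\<^sup>2 * (c*x)^4 = c^4 * x^6" by algebra
      ultimately have e: "x\<^sup>2 * (c*x)^4 = c^4 * x powr 6" by simp
      show ?thesis unfolding times_divide_times_eq e by (simp add: mult.commute)
    qed
    also have "\<dots> = c^4/4 * x powr (6 - p)" by (simp add: powr_diff)
    also have "\<dots> \<le> c^4/4 * 1"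
      using that p5 by (intro mult_left_mono powr_le1) auto
    finally show ?thesis by simp
  qed
  have b2: "f x \<le> 4 * x powr (-p)" if "1 < x" for x
  proof -
    have "f x \<le> 1 / x powr p * 4"
      unfolding f_def using that e1[of x]
      by (intro mult_mono divide_right_mono hh_le4 hh_nonneg) auto
    then show ?thesis by (simp add: powr_minus divide_inverse)
  qed
  have i1: "set_integrable lborel {0<..1} f"
  proof (rule set_integrable_bound)
    show "set_integrable lborel {0<..1} (\<lambda>x::real. c^4/4)"
      by (rule set_integrable_subset[OF borel_integrable_atLeastAtMost'[of 0 1]]) auto
    show "set_borel_measurable lborel {0<..1} f" unfolding set_borel_measurable_def by measurable
    show "AE x in lborel. x \<in> {0<..1} \<longrightarrow> norm (f x) \<le> norm (c^4/4)"
      using b1 fnn by (intro AE_I2) auto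
  qed
  have i2: "set_integrable lborel {1<..} f"
  proof (rule set_integrable_bound)
    show "set_integrable lborel {1<..} (\<lambda>x::real. 4 * x powr (-p))" using tail_int p1 .
    show "set_borel_measurable lborel {1<..} f" unfolding set_borel_measurable_def by measurable
    show "AE x in lborel. x \<in> {1<..} \<longrightarrow> norm (f x) \<le> norm (4 * x powr (-p))"
      using b2 fnn by (intro AE_I2) auto
  qed
  have "set_integrable lborel ({0<..1} \<union> {1<..}) f"
    by (rule set_integrable_Un[OF i1 i2]) auto
  moreover have "{0<..1} \<union> {1<..} = {0::real<..}" by auto
  ultimately show fint: "set_integrable lborel {0<..} f" by simp
  define a where "a = 2 / c"
  define b where "b = 3 / c"
  have ab: "0 < a" "a < b" using c by (auto simp: a_def b_def field_simps)
  define m where "m = (1 - exp (- (a\<^sup>2))) / b powr p * ((1 - cos 1)^2 / 3)"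
  have cos1: "cos (1::real) < 1" using cos_monotone_0_pi[of 0 1] pi_gt3 by simp
  have mpos: "0 < m" unfolding m_def using ab cos1 by (intro mult_pos_pos divide_pos_pos) auto
  have mle: "m \<le> f x" if "x \<in> {a..b}" for x
  proof -
    have x: "a \<le> x" "x \<le> b" using that by auto
    have "2 \<le> c * x" "c * x \<le> 3" using x c by (auto simp: a_def b_def field_simps)
    then have hl: "(1 - cos 1)^2 / 3 \<le> hh (c * x)" by (rule hh_lower)
    have "exp (- (x\<^sup>2)) \<le> exp (- (a\<^sup>2))" using x ab by (simp add: power_mono)
    then have n1: "1 - exp (- (a\<^sup>2)) \<le> 1 - exp (- (x\<^sup>2))" by simp
    have n2: "x powr p \<le> b powr p" using x ab p1 by (intro powr_mono2) auto
    have "(1 - exp (- (a\<^sup>2))) / b powr p \<le> (1 - exp (- (x\<^sup>2))) / x powr p"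
      using n1 n2 ab x by (intro frac_le) auto
    then show ?thesis unfolding m_def f_def using hl cos1
      by (intro mult_mono) (auto intro!: divide_nonneg_nonneg simp: e1)
  qed
  have iab: "set_integrable lborel {a..b} f"
    by (rule set_integrable_subset[OF fint]) (use ab in auto)
  have "(LINT x:{a..b}|lborel. f x) \<le> (LINT x:{0<..}|lborel. f x)"
    unfolding set_lebesgue_integral_def
  proof (rule integral_mono)
    show "integrable lborel (\<lambda>x. indicator {a..b} x *\<^sub>R f x)" using iab by (simp add: set_integrable_def)
    show "integrable lborel (\<lambda>x. indicator {0<..} x *\<^sub>R f x)" using fint by (simp add: set_integrable_def)
    show "indicator {a..b} x *\<^sub>R f x \<le> indicator {0<..} x *\<^sub>R f x" for x
      using ab fnn[of x] by (auto split: split_indicator)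
  qed
  moreover have "(LINT x:{a..b}|lborel. m) \<le> (LINT x:{a..b}|lborel. f x)"
    by (rule set_integral_mono[OF borel_integrable_atLeastAtMost' iab mle]) auto
  moreover have "(LINT x:{a..b}|lborel. m) = m * (b - a)"
    using set_borel_integral_eq_integral(2)[OF borel_integrable_atLeastAtMost'[of a b "\<lambda>_. m"]] ab
    by simp
  moreover have "0 < m * (b - a)" using mpos ab by simp
  ultimately show "0 < (LINT x:{0<..}|lborel. f x)" by linarith
qed


lemma lbint_pos:
  fixes f :: "real \<Rightarrow> real"
  assumes "a < b" "continuous_on {a..b} f" "\<And>x. x \<in> {a..b} \<Longrightarrow> 0 < f x"
  shows "0 < (LBINT x=a..b. f x)"
proof -
  obtain x0 where x0: "x0 \<in> {a..b}" "\<And>y. y \<in> {a..b} \<Longrightarrow> f x0 \<le> f y"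
    using continuous_attains_inf[of "{a..b}" f] assms by auto
  have "integral {a..b} (\<lambda>_. f x0) \<le> integral {a..b} f"
    by (intro integral_le integrable_continuous_interval assms x0) auto
  then have "(b - a) * f x0 \<le> integral {a..b} f" using assms by simp
  moreover have "0 < (b - a) * f x0" using assms x0 by simp
  moreover have "(LBINT x=a..b. f x) = integral {a..b} f"
    using assms by (intro interval_integral_eq_integral borel_integrable_atLeastAtMost') auto
  ultimately show ?thesis by linarith
qed

theorem mainTheorem6:
  shows "(\<forall>x::real. x \<ge> 0 \<longrightarrow>
            J0 (sqrt 2 * x) - 2 * J0 x + 1 =
            2 / pi * integral {0..pi/2} (\<lambda>t. (1 - cos (x * cos t)) * (1 - cos (x * sin t))))
       \<and> (\<forall>x::real. x \<ge> 0 \<longrightarrow> J0 (sqrt 2 * x) - 2 * J0 x + 1 \<ge> 0)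
       \<and> (\<forall>r \<theta>2 \<sigma> \<alpha> b \<kappa> \<eta> :: real.
            r > 0 \<longrightarrow> \<theta>2 > 0 \<longrightarrow> \<sigma> > 0 \<longrightarrow> 0 < \<alpha> \<longrightarrow> \<alpha> < 2 \<longrightarrow>
            0 < b \<longrightarrow> b < 1/2 \<longrightarrow> g r \<alpha> b (\<kappa>, \<eta>, \<theta>2, \<sigma>\<^sup>2) > 0)"
proof (intro conjI allI impI)
  fix x :: real
  show "J0 (sqrt 2 * x) - 2 * J0 x + 1 =
     2 / pi * integral {0..pi/2} (\<lambda>t. (1 - cos (x * cos t)) * (1 - cos (x * sin t)))"
    by (rule part1)
  show "J0 (sqrt 2 * x) - 2 * J0 x + 1 \<ge> 0" using hh_nonneg[of x] by (simp add: hh_def)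
next
  fix r \<theta>2 \<sigma> \<alpha> b \<kappa> \<eta> :: real
  assume r: "r > 0" and th: "\<theta>2 > 0" and s: "\<sigma> > 0" and a0: "0 < \<alpha>" and a2: "\<alpha> < 2"
    and b0: "0 < b" and b1: "b < 1/2"
  have fe: "(\<lambda>x. (1 - exp (- (x\<^sup>2))) / x powr (1 + 2 * \<alpha>) *
        (J0 (sqrt 2 * r * x / sqrt \<theta>2) - 2 * J0 (r * x / sqrt \<theta>2) + 1)) =
      (\<lambda>x. (1 - exp (- (x\<^sup>2))) / x powr (1 + 2 * \<alpha>) * hh (r / sqrt \<theta>2 * x))"
    by (rule ext) (simp add: hh_def mult.assoc)
  have "0 < (LINT x:{0<..}|lborel. (1 - exp (- (x\<^sup>2))) / x powr (1 + 2 * \<alpha>) * hh (r / sqrt \<theta>2 * x))"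
    by (rule core(2)) (use r th a0 a2 in auto)
  then have psi: "0 < psi r \<alpha> \<theta>2" unfolding psi_def fe using th pi_gt_zero
    by (intro mult_pos_pos) auto
  have ex: "exp (- \<kappa> * y - \<eta> * z) = exp (- \<kappa> * y) * exp (- \<eta> * z)" for y z
    by (simp add: exp_add[symmetric])
  have in1: "0 < (LBINT y=b..1 - b. exp (- \<kappa> * y))"
    using b1 by (intro lbint_pos continuous_intros) auto
  have in2: "0 < (LBINT z=b..1 - b. exp (- \<eta> * z))"
    using b1 by (intro lbint_pos continuous_intros) auto
  have "(LBINT z=b..(1 - b). (LBINT y=b..(1 - b). exp (- \<kappa> * y - \<eta> * z))) =
       (LBINT y=b..1 - b. exp (- \<kappa> * y)) * (LBINT z=b..1 - b. exp (- \<eta> * z))"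
    by (simp only: ex interval_lebesgue_integral_mult_left interval_lebesgue_integral_mult_right)
  then have dbl: "0 < (LBINT z=b..(1 - b). (LBINT y=b..(1 - b). exp (- \<kappa> * y - \<eta> * z)))"
    using in1 in2 by simp
  have "0 < (1 - 2 * b)\<^sup>2" using b1 by simp
  then show "g r \<alpha> b (\<kappa>, \<eta>, \<theta>2, \<sigma>\<^sup>2) > 0"
    unfolding g_def using s psi dbl by simp
qed

end
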